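(* In the setting below, for every $m\in\mathbb N$ and $t\in\mathbb C$, $$\sum_{k=0}^n(-1)^kP_{\sigma_{\tau(m),k}}(t)=-c(n)\dim(\tau(m)).$$
   Context: $G=\mathrm{Spin}(2n+1,1)$, $M=\mathrm{Spin}(2n)$. Cartan subalgebra spanned by $H_1=E_{1,2}+E_{2,1}$ and $H_i=\sqrt{-1}(E_{2i-1,2i}-E_{2i,2i-1})$ ($2\le i\le n+1$); $e_i(H_j)=\delta_{ij}$; positive roots $\Delta^+=\{e_i\pm e_j:i<j\}$; $\rho_j=n+1-j$, $\rho_G=\sum_{j=1}^{n+1}\rho_je_j$, $\rho_M=\sum_{j=2}^{n+1}\rho_je_j$; $\langle\cdot,\cdot\rangle$ is the form with $e_i$ orthonormal. For $\sigma\in\widehat M$ with highest weight $\Lambda(\sigma)=\sum_{i=2}^{n+1}k_ie_i$, $P_\sigma(z)=-c(n)\prod_{\alpha\in\Delta^+}\frac{\langle ze_1+\Lambda(\sigma)+\rho_M,\alpha\rangle}{\langle\rho_G,\alpha\rangle}$ with $c(n)>0$ a constant depending only on $n$. Fix integers $\tau_1\ge\dots\ge\tau_{n+1}\ge0$; $\tau(m)$ is the representation of $G$ with highest weight $\sum_{i=1}^{n+1}(\tau_i+m)e_i$, and for $k=0,\dots,n$, $\sigma_{\tau(m),k}\in\widehat M$ has highest weight $(\tau_1+m+1)e_2+\dots+(\tau_k+m+1)e_{k+1}+(\tau_{k+2}+m)e_{k+2}+\dots+(\tau_{n+1}+m)e_{n+1}$. *)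

theory Defs
  imports Complex_Main
begin

text \<open>Weights are functions nat => complex; coordinate j is the coefficient of e_j,
  only coordinates 1..n+1 are relevant (all weights considered vanish elsewhere).\<close>

definition ebasis :: "nat \<Rightarrow> nat \<Rightarrow> complex" where
  "ebasis i = (\<lambda>j. if j = i then 1 else 0)"

definition wplus :: "(nat \<Rightarrow> complex) \<Rightarrow> (nat \<Rightarrow> complex) \<Rightarrow> nat \<Rightarrow> complex" where
  "wplus x y = (\<lambda>j. x j + y j)"

definition wminus :: "(nat \<Rightarrow> complex) \<Rightarrow> (nat \<Rightarrow> complex) \<Rightarrow> nat \<Rightarrow> complex" where
  "wminus x y = (\<lambda>j. x j - y j)"

definition wscale :: "complex \<Rightarrow> (nat \<Rightarrow> complex) \<Rightarrow> nat \<Rightarrow> complex" where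
  "wscale z x = (\<lambda>j. z * x j)"

definition winner :: "nat \<Rightarrow> (nat \<Rightarrow> complex) \<Rightarrow> (nat \<Rightarrow> complex) \<Rightarrow> complex" where
  "winner n x y = (\<Sum>j = 1..n+1. x j * y j)"

definition pos_roots :: "nat \<Rightarrow> (nat \<Rightarrow> complex) set" where
  "pos_roots n =
     {wplus (ebasis i) (ebasis j) | i j. 1 \<le> i \<and> i < j \<and> j \<le> n + 1} \<union>
     {wminus (ebasis i) (ebasis j) | i j. 1 \<le> i \<and> i < j \<and> j \<le> n + 1}"

definition rho_G :: "nat \<Rightarrow> nat \<Rightarrow> complex" where
  "rho_G n = (\<lambda>j. if 1 \<le> j \<and> j \<le> n + 1 then of_nat (n + 1 - j) else 0)"

definition rho_M :: "nat \<Rightarrow> nat \<Rightarrow> complex" where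
  "rho_M n = (\<lambda>j. if 2 \<le> j \<and> j \<le> n + 1 then of_nat (n + 1 - j) else 0)"

text \<open>P_sigma(z) for sigma in hat M with highest weight Lam (supported on 2..n+1).\<close>
definition P_sigma :: "nat \<Rightarrow> real \<Rightarrow> (nat \<Rightarrow> complex) \<Rightarrow> complex \<Rightarrow> complex" where
  "P_sigma n c Lam z =
     - complex_of_real c *
       (\<Prod>\<alpha>\<in>pos_roots n.
          winner n (wplus (wplus (wscale z (ebasis 1)) Lam) (rho_M n)) \<alpha> / winner n (rho_G n) \<alpha>)"

text \<open>Dimension of the irreducible representation of G with highest weight lam
  (Weyl dimension formula).\<close>
definition dim_G :: "nat \<Rightarrow> (nat \<Rightarrow> complex) \<Rightarrow> complex" where
  "dim_G n lam = (\<Prod>\<alpha>\<in>pos_roots n. winner n (wplus lam (rho_G n)) \<alpha> / winner n (rho_G n) \<alpha>)"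

definition tau_weight :: "nat \<Rightarrow> (nat \<Rightarrow> int) \<Rightarrow> nat \<Rightarrow> nat \<Rightarrow> complex" where
  "tau_weight n tau m = (\<lambda>j. if 1 \<le> j \<and> j \<le> n + 1 then of_int (tau j + int m) else 0)"

definition sigma_weight :: "nat \<Rightarrow> (nat \<Rightarrow> int) \<Rightarrow> nat \<Rightarrow> nat \<Rightarrow> nat \<Rightarrow> complex" where
  "sigma_weight n tau m k = (\<lambda>j.
     if 2 \<le> j \<and> j \<le> k + 1 then of_int (tau (j - 1) + int m + 1)
     else if k + 2 \<le> j \<and> j \<le> n + 1 then of_int (tau j + int m)
     else 0)"

end

theory Submission
  imports Defs "HOL-Computational_Algebra.Polynomial"
begin

definition PS :: "nat set \<Rightarrow> (nat \<times> nat) set" where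
  "PS S = {(i,j). i \<in> S \<and> j \<in> S \<and> i < j}"

definition VD :: "(nat \<Rightarrow> complex) \<Rightarrow> nat set \<Rightarrow> complex" where
  "VD y S = (\<Prod>(i,j)\<in>PS S. y i - y j)"

lemma finite_PS: "finite S \<Longrightarrow> finite (PS S)"
  by (rule finite_subset[of _ "S \<times> S"]) (auto simp: PS_def)

lemma VD_cong: "(\<And>i. i \<in> S \<Longrightarrow> y i = y' i) \<Longrightarrow> VD y S = VD y' S"
  unfolding VD_def by (rule prod.cong) (auto simp: PS_def)

lemma VD_insert:
  assumes "finite S" "l \<notin> S"
  shows "VD y (insert l S) = VD y S * (-1) ^ card {i\<in>S. i < l} * (\<Prod>i\<in>S. y l - y i)"
proof -
  have eq: "PS (insert l S) = PS S \<union> ((\<lambda>i. (i,l)) ` {i\<in>S. i < l} \<union> (\<lambda>j. (l,j)) ` {j\<in>S. l < j})"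
    using assms(2) by (auto simp: PS_def)
  have fin: "finite (PS S)" using finite_PS assms by blast
  have d1: "PS S \<inter> ((\<lambda>i. (i,l)) ` {i\<in>S. i < l} \<union> (\<lambda>j. (l,j)) ` {j\<in>S. l < j}) = {}"
    using assms(2) by (auto simp: PS_def)
  have d2: "(\<lambda>i. (i,l)) ` {i\<in>S. i < l} \<inter> (\<lambda>j. (l,j)) ` {j\<in>S. l < j} = {}" by auto
  have "VD y (insert l S) = VD y S * ((\<Prod>(i,j)\<in>(\<lambda>i. (i,l)) ` {i\<in>S. i < l}. y i - y j) *
          (\<Prod>(i,j)\<in>(\<lambda>j. (l,j)) ` {j\<in>S. l < j}. y i - y j))"
    unfolding VD_def eq
    using assms fin d1 d2 by (simp add: prod.union_disjoint)
  also have "(\<Prod>(i,j)\<in>(\<lambda>i. (i,l)) ` {i\<in>S. i < l}. y i - y j) = (\<Prod>i\<in>{i\<in>S. i < l}. y i - y l)"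
    by (subst prod.reindex) (auto simp: inj_on_def)
  also have "\<dots> = (-1) ^ card {i\<in>S. i < l} * (\<Prod>i\<in>{i\<in>S. i < l}. y l - y i)"
    by (rule prod_diff_swap)
  also have "(\<Prod>(i,j)\<in>(\<lambda>j. (l,j)) ` {j\<in>S. l < j}. y i - y j) = (\<Prod>i\<in>{j\<in>S. l < j}. y l - y i)"
    by (subst prod.reindex) (auto simp: inj_on_def)
  also have "(\<Prod>i\<in>S. y l - y i) = (\<Prod>i\<in>{i\<in>S. i < l}. y l - y i) * (\<Prod>i\<in>{j\<in>S. l < j}. y l - y i)"
  proof -
    have "S = {i\<in>S. i < l} \<union> {j\<in>S. l < j}" using assms(2) by (auto; metis linorder_neqE_nat)
    then show ?thesis using assms(1)
      by (metis (no_types, lifting) prod.union_disjoint finite_Un disjoint_iff mem_Collect_eq less_asym)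
  qed
  ultimately show ?thesis by (simp add: algebra_simps)
qed

lemma VD_reindex:
  assumes "strict_mono_on A \<phi>"
  shows "VD (\<lambda>p. y (\<phi> p)) A = VD y (\<phi> ` A)"
proof -
  have inj: "inj_on \<phi> A" using assms by (rule strict_mono_on_imp_inj_on)
  have eq: "PS (\<phi> ` A) = (\<lambda>(p,q). (\<phi> p, \<phi> q)) ` PS A"
  proof
    show "PS (\<phi> ` A) \<subseteq> (\<lambda>(p,q). (\<phi> p, \<phi> q)) ` PS A"
    proof
      fix x assume "x \<in> PS (\<phi> ` A)"
      then obtain p q where pq: "p \<in> A" "q \<in> A" "\<phi> p < \<phi> q" "x = (\<phi> p, \<phi> q)"
        by (auto simp: PS_def)
      then have "p < q" using strict_mono_on_less[OF assms] by blast
      then show "x \<in> (\<lambda>(p,q). (\<phi> p, \<phi> q)) ` PS A" using pq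
        by (auto simp: PS_def image_iff intro!: bexI[of _ "(p,q)"])
    qed
  next
    show "(\<lambda>(p,q). (\<phi> p, \<phi> q)) ` PS A \<subseteq> PS (\<phi> ` A)"
      using strict_mono_onD[OF assms] by (auto simp: PS_def)
  qed
  have inj2: "inj_on (\<lambda>(p,q). (\<phi> p, \<phi> q)) (PS A)"
    using inj by (auto simp: inj_on_def PS_def)
  show ?thesis unfolding VD_def eq
    by (subst prod.reindex[OF inj2]) (simp add: case_prod_beta)
qed

lemma lagrange_one:
  fixes b :: "nat \<Rightarrow> complex"
  assumes fin: "finite W" and ne: "W \<noteq> {}" and inj: "inj_on b W"
  shows "(\<Sum>l\<in>W. (\<Prod>i\<in>W-{l}. (s - b i)) / (\<Prod>i\<in>W-{l}. (b l - b i))) = 1"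
proof -
  define p where "p = (\<Sum>l\<in>W. smult (1 / (\<Prod>i\<in>W-{l}. (b l - b i))) (\<Prod>i\<in>W-{l}. [:- b i, 1:]))"
  have ev: "poly p x = (\<Sum>l\<in>W. (\<Prod>i\<in>W-{l}. (x - b i)) / (\<Prod>i\<in>W-{l}. (b l - b i)))" for x
    by (simp add: p_def poly_sum poly_prod)
  have cW: "card W > 0" using fin ne by (simp add: card_gt_0_iff)
  have "degree p \<le> card W - 1"
    unfolding p_def
  proof (rule degree_sum_le[OF fin])
    fix l assume l: "l \<in> W"
    have "degree (smult (1 / (\<Prod>i\<in>W-{l}. (b l - b i))) (\<Prod>i\<in>W-{l}. [:- b i, 1:]))
        \<le> degree (\<Prod>i\<in>W-{l}. [:- b i, 1:])" by (rule degree_smult_le)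
    also have "\<dots> \<le> sum (degree \<circ> (\<lambda>i. [:- b i, 1:])) (W - {l})"
      by (rule degree_prod_sum_le) (use fin in auto)
    also have "\<dots> = card W - 1" using l fin by simp
    finally show "degree (smult (1 / (\<Prod>i\<in>W-{l}. (b l - b i))) (\<Prod>i\<in>W-{l}. [:- b i, 1:])) \<le> card W - 1" .
  qed
  then have deg: "degree p < card (b ` W)" using cW card_image[OF inj] by simp
  have roots: "poly p x = poly 1 x" if "x \<in> b ` W" for x
  proof -
    from that obtain j where j: "j \<in> W" "x = b j" by auto
    have z: "(\<Prod>i\<in>W-{l}. (b j - b i)) = 0" if "l \<in> W - {j}" for l
      using that j fin by (intro prod_zero) auto
    have "\<forall>i\<in>W-{j}. b j - b i \<noteq> 0" using inj j by (auto simp: inj_on_def)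
    then have nz: "(\<Prod>i\<in>W-{j}. (b j - b i)) \<noteq> 0"
      using fin by (simp add: prod_zero_iff)
    have "poly p x = (\<Prod>i\<in>W-{j}. (b j - b i)) / (\<Prod>i\<in>W-{j}. (b j - b i))
        + (\<Sum>l\<in>W-{j}. (\<Prod>i\<in>W-{l}. (b j - b i)) / (\<Prod>i\<in>W-{l}. (b l - b i)))"
      unfolding ev j(2) by (rule sum.remove[OF fin j(1)])
    also have "\<dots> = 1" using nz z by simp
    finally show ?thesis by simp
  qed
  have "p = 1" by (rule poly_eqI_degree[OF roots]) (use deg in auto)
  then show ?thesis using ev[of s] by simp
qed


lemma winner_plus:
  assumes "i \<in> {1..n+1}" "j \<in> {1..n+1}"
  shows "winner n x (wplus (ebasis i) (ebasis j)) = x i + x j"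
proof -
  have "winner n x (wplus (ebasis i) (ebasis j)) =
     (\<Sum>l=1..n+1. (if l = i then x l else 0) + (if l = j then x l else 0))"
    unfolding winner_def wplus_def ebasis_def by (rule sum.cong) auto
  then show ?thesis using assms by (simp only: sum.distrib sum.delta finite_atLeastAtMost) simp
qed

lemma winner_minus:
  assumes "i \<in> {1..n+1}" "j \<in> {1..n+1}"
  shows "winner n x (wminus (ebasis i) (ebasis j)) = x i - x j"
proof -
  have "winner n x (wminus (ebasis i) (ebasis j)) =
     (\<Sum>l=1..n+1. (if l = i then x l else 0) - (if l = j then x l else 0))"
    unfolding winner_def wminus_def ebasis_def by (rule sum.cong) auto
  then show ?thesis using assms by (simp only: sum_subtractf sum.delta finite_atLeastAtMost) simp
qed

lemma pos_roots_eq: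
  "pos_roots n = (\<lambda>(i,j). wplus (ebasis i) (ebasis j)) ` PS {1..n+1} \<union>
                 (\<lambda>(i,j). wminus (ebasis i) (ebasis j)) ` PS {1..n+1}"
  unfolding pos_roots_def PS_def by auto

lemma prod_pos_roots:
  "(\<Prod>\<alpha>\<in>pos_roots n. f \<alpha>) =
     (\<Prod>(i,j)\<in>PS {1..n+1}. f (wplus (ebasis i) (ebasis j)) * f (wminus (ebasis i) (ebasis j)))"
proof -
  have fin: "finite (PS {1..n+1})" by (simp add: finite_PS)
  have inj1: "inj_on (\<lambda>(i,j). wplus (ebasis i) (ebasis j)) (PS {1..n+1})"
  proof (rule inj_onI, clarify)
    fix i j k l assume a: "(i,j) \<in> PS {1..n+1}" "(k,l) \<in> PS {1..n+1}"
      and e: "wplus (ebasis i) (ebasis j) = wplus (ebasis k) (ebasis l)"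
    have "\<And>p. wplus (ebasis i) (ebasis j) p = wplus (ebasis k) (ebasis l) p" using e by simp
    from this[of i] this[of j] this[of k] this[of l] a show "i = k \<and> j = l"
      by (auto simp: wplus_def ebasis_def PS_def split: if_splits)
  qed
  have inj2: "inj_on (\<lambda>(i,j). wminus (ebasis i) (ebasis j)) (PS {1..n+1})"
  proof (rule inj_onI, clarify)
    fix i j k l assume a: "(i,j) \<in> PS {1..n+1}" "(k,l) \<in> PS {1..n+1}"
      and e: "wminus (ebasis i) (ebasis j) = wminus (ebasis k) (ebasis l)"
    have ev: "\<And>p. wminus (ebasis i) (ebasis j) p = wminus (ebasis k) (ebasis l) p" using e by simp
    from a have ne: "i \<noteq> j" "k \<noteq> l" by (auto simp: PS_def)
    have "i = k" using ev[of i] ne by (simp add: wminus_def ebasis_def split: if_splits)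
    moreover have "j = l" using ev[of j] ne by (simp add: wminus_def ebasis_def split: if_splits)
    ultimately show "i = k \<and> j = l" by simp
  qed
  have disj: "(\<lambda>(i,j). wplus (ebasis i) (ebasis j)) ` PS {1..n+1} \<inter>
                 (\<lambda>(i,j). wminus (ebasis i) (ebasis j)) ` PS {1..n+1} = {}"
  proof (rule ccontr)
    assume "\<not> ?thesis"
    then obtain i j k l where a: "(i,j) \<in> PS {1..n+1}" "(k,l) \<in> PS {1..n+1}"
      and e: "wplus (ebasis i) (ebasis j) = wminus (ebasis k) (ebasis l)" by auto
    have "wplus (ebasis i) (ebasis j) l = wminus (ebasis k) (ebasis l) l" using e by simp
    then show False using a by (auto simp: wplus_def wminus_def ebasis_def PS_def split: if_splits)
  qed
  have "(\<Prod>\<alpha>\<in>pos_roots n. f \<alpha>) = prod f ((\<lambda>(i,j). wplus (ebasis i) (ebasis j)) ` PS {1..n+1}) *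
     prod f ((\<lambda>(i,j). wminus (ebasis i) (ebasis j)) ` PS {1..n+1})"
    unfolding pos_roots_eq by (rule prod.union_disjoint[OF finite_imageI[OF fin] finite_imageI[OF fin] disj])
  also have "prod f ((\<lambda>(i,j). wplus (ebasis i) (ebasis j)) ` PS {1..n+1}) =
     prod (f \<circ> (\<lambda>(i,j). wplus (ebasis i) (ebasis j))) (PS {1..n+1})" by (rule prod.reindex[OF inj1])
  also have "prod f ((\<lambda>(i,j). wminus (ebasis i) (ebasis j)) ` PS {1..n+1}) =
     prod (f \<circ> (\<lambda>(i,j). wminus (ebasis i) (ebasis j))) (PS {1..n+1})" by (rule prod.reindex[OF inj2])
  finally show ?thesis by (simp add: prod.distrib case_prod_beta comp_def)
qed

lemma prod_pos_roots_ratio: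
  "(\<Prod>\<alpha>\<in>pos_roots n. winner n x \<alpha> / winner n r \<alpha>) =
     VD (\<lambda>i. (x i)^2) {1..n+1} / VD (\<lambda>i. (r i)^2) {1..n+1}"
proof -
  have "(\<Prod>\<alpha>\<in>pos_roots n. winner n x \<alpha> / winner n r \<alpha>) =
     (\<Prod>(i,j)\<in>PS {1..n+1}. ((x i)^2 - (x j)^2) / ((r i)^2 - (r j)^2))"
    unfolding prod_pos_roots
  proof (rule prod.cong[OF refl], clarify)
    fix i j assume "(i,j) \<in> PS {1..n+1}"
    then have ij: "i \<in> {1..n+1}" "j \<in> {1..n+1}" by (auto simp: PS_def)
    show "winner n x (wplus (ebasis i) (ebasis j)) / winner n r (wplus (ebasis i) (ebasis j)) *
        (winner n x (wminus (ebasis i) (ebasis j)) / winner n r (wminus (ebasis i) (ebasis j))) =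
        ((x i)^2 - (x j)^2) / ((r i)^2 - (r j)^2)"
      using ij by (simp add: winner_plus winner_minus power2_eq_square algebra_simps)
  qed
  also have "\<dots> = VD (\<lambda>i. (x i)^2) {1..n+1} / VD (\<lambda>i. (r i)^2) {1..n+1}"
    unfolding VD_def by (simp add: prod_dividef case_prod_beta)
  finally show ?thesis .
qed

lemma core_identity:
  fixes y :: "nat \<Rightarrow> complex"
  assumes inj: "inj_on y {1..Suc n}"
  shows "(\<Sum>k=0..n. (-1)^k * VD y ({0..Suc n} - {Suc k})) = VD y {1..Suc n}"
proof -
  let ?W = "{1..Suc n}"
  let ?D = "VD y ?W"
  have tm: "(-1)^(l-1) * VD y ({0..Suc n} - {l}) =
      ?D * ((\<Prod>i\<in>?W-{l}. (y 0 - y i)) / (\<Prod>i\<in>?W-{l}. (y l - y i)))" if l: "l \<in> ?W" for l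
  proof -
    have e1: "{0..Suc n} - {l} = insert 0 (?W - {l})" using l by auto
    have c0: "{i \<in> ?W - {l}. i < 0} = {}" by auto
    have v1: "VD y ({0..Suc n} - {l}) = VD y (?W - {l}) * (\<Prod>i\<in>?W-{l}. (y 0 - y i))"
      unfolding e1 by (subst VD_insert) (auto simp: c0)
    have e2: "?W = insert l (?W - {l})" using l by auto
    have c1: "{i \<in> ?W - {l}. i < l} = {1..<l}" using l by auto
    have h: "VD y (insert l (?W-{l})) = VD y (?W-{l}) * (-1)^card {i\<in>?W-{l}. i<l} * (\<Prod>i\<in>?W-{l}. (y l - y i))"
      by (rule VD_insert) auto
    have v2: "?D = VD y (?W - {l}) * (-1)^(l-1) * (\<Prod>i\<in>?W-{l}. (y l - y i))"
      using h[unfolded c1 e2[symmetric]] by simp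
    have "\<forall>i\<in>?W-{l}. y l - y i \<noteq> 0" using inj l by (auto simp: inj_on_def)
    then have nz: "(\<Prod>i\<in>?W-{l}. (y l - y i)) \<noteq> 0" by (simp add: prod_zero_iff)
    have sq: "((-1::complex)^(l-1)) * (-1)^(l-1) = 1"
      by (simp add: power_mult_distrib[symmetric])
    show ?thesis unfolding v1 v2 using nz
      by (simp add: field_simps)
  qed
  have "(\<Sum>k=0..n. (-1)^k * VD y ({0..Suc n} - {Suc k})) =
        (\<Sum>l\<in>?W. (-1)^(l-1) * VD y ({0..Suc n} - {l}))"
    using sum.shift_bounds_cl_Suc_ivl[of "\<lambda>l. (-1)^(l-1) * VD y ({0..Suc n} - {l})" 0 n] by simp
  also have "\<dots> = (\<Sum>l\<in>?W. ?D * ((\<Prod>i\<in>?W-{l}. (y 0 - y i)) / (\<Prod>i\<in>?W-{l}. (y l - y i))))"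
    by (rule sum.cong[OF refl], rule tm) assumption
  also have "\<dots> = ?D * (\<Sum>l\<in>?W. (\<Prod>i\<in>?W-{l}. (y 0 - y i)) / (\<Prod>i\<in>?W-{l}. (y l - y i)))"
    by (rule sum_distrib_left[symmetric])
  also have "\<dots> = ?D" using lagrange_one[OF _ _ inj, of "y 0"] by simp
  finally show ?thesis .
qed


lemma x_eval:
  fixes tau :: "nat \<Rightarrow> int"
  assumes k: "k \<le> n" and p: "p \<in> {1..n+1}"
  shows "wplus (wplus (wscale t (ebasis 1)) (sigma_weight n tau m k)) (rho_M n) p =
     (\<lambda>q. if q = 0 then t else of_int (tau q + int m + int (n + 1 - q)))
       (if p = 1 then 0 else if p \<le> k + 1 then p - 1 else p)"
proof -
  have p1: "1 \<le> p" using p by simp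
  consider "p = 1" | "2 \<le> p \<and> p \<le> k + 1" | "k + 2 \<le> p" using p1 by linarith
  then show ?thesis
  proof cases
    case 1 then show ?thesis by (simp add: wplus_def wscale_def ebasis_def sigma_weight_def rho_M_def)
  next
    case 2
    then have e: "int (n + 1 - (p - 1)) = int (n + 1 - p) + 1" using p k by auto
    show ?thesis using 2 p k
      by (simp add: wplus_def wscale_def ebasis_def sigma_weight_def rho_M_def e)
  next
    case 3
    then show ?thesis using p k
      by (simp add: wplus_def wscale_def ebasis_def sigma_weight_def rho_M_def)
  qed
qed

lemma phi_mono: "strict_mono_on {1..n+1} (\<lambda>p::nat. if p = 1 then 0 else if p \<le> k + 1 then p - 1 else p)"
  by (rule strict_mono_onI) auto

lemma phi_image:
  assumes "k \<le> n"
  shows "(\<lambda>p::nat. if p = 1 then 0 else if p \<le> k + 1 then p - 1 else p) ` {1..n+1} = {0..Suc n} - {Suc k}"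
proof
  show "(\<lambda>p::nat. if p = 1 then 0 else if p \<le> k + 1 then p - 1 else p) ` {1..n+1} \<subseteq> {0..Suc n} - {Suc k}"
    by auto
next
  show "{0..Suc n} - {Suc k} \<subseteq> (\<lambda>p::nat. if p = 1 then 0 else if p \<le> k + 1 then p - 1 else p) ` {1..n+1}"
  proof
    fix v assume v: "v \<in> {0..Suc n} - {Suc k}"
    consider "v = 0" | "1 \<le> v \<and> v \<le> k" | "k + 2 \<le> v" using v by force
    then show "v \<in> (\<lambda>p::nat. if p = 1 then 0 else if p \<le> k + 1 then p - 1 else p) ` {1..n+1}"
    proof cases
      case 1 then show ?thesis by (intro image_eqI[of _ _ 1]) auto
    next
      case 2 then show ?thesis using assms by (intro image_eqI[of _ _ "v+1"]) auto
    next
      case 3 then show ?thesis using v by (intro image_eqI[of _ _ v]) auto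
    qed
  qed
qed

theorem corollary5p5:
  fixes n m :: nat and tau :: "nat \<Rightarrow> int" and c :: real and t :: complex
  assumes "n \<ge> 1"
    and "c > 0"
    and "\<And>i. 1 \<le> i \<Longrightarrow> i \<le> n \<Longrightarrow> tau (i + 1) \<le> tau i"
    and "tau (n + 1) \<ge> 0"
  shows "(\<Sum>k = 0..n. (-1) ^ k * P_sigma n c (sigma_weight n tau m k) t)
           = - complex_of_real c * dim_G n (tau_weight n tau m)"
proof -
  define A where "A = (\<lambda>q. tau q + int m + int (n + 1 - q))"
  define z where "z = (\<lambda>q. if q = 0 then t else of_int (A q))"
  define y where "y = (\<lambda>q. (z q)^2)"
  define R where "R = VD (\<lambda>i. (rho_G n i)^2) {1..n+1}"
  have dec: "tau j \<le> tau i" if "1 \<le> i" "i \<le> j" "j \<le> n + 1" for i j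
    using that(2,3)
  proof (induction j rule: dec_induct)
    case base then show ?case by simp
  next
    case (step q)
    then have "tau (q + 1) \<le> tau q" using assms(3)[of q] that(1) by simp
    then show ?case using step by simp
  qed
  have nonneg: "tau i \<ge> 0" if "1 \<le> i" "i \<le> n + 1" for i
    using dec[OF that(1) that(2)] assms(4) by simp
  have Apos: "A i \<ge> 0" if "1 \<le> i" "i \<le> n + 1" for i
    using nonneg[OF that] by (simp add: A_def)
  have Adec: "A j < A i" if "1 \<le> i" "i < j" "j \<le> n + 1" for i j
    using dec[of i j] that by (simp add: A_def)
  have inj: "inj_on y {1..Suc n}"
  proof (rule inj_onI)
    fix i j assume ij: "i \<in> {1..Suc n}" "j \<in> {1..Suc n}" "y i = y j"
    then have "of_int ((A i)^2) = (of_int ((A j)^2) :: complex)"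
      by (simp add: y_def z_def)
    then have "(A i)^2 = (A j)^2" by (simp only: of_int_eq_iff)
    then have "A i = A j" using Apos ij by (simp add: power2_eq_iff_nonneg)
    then show "i = j" using Adec ij by (metis atLeastAtMost_iff linorder_neqE_nat less_irrefl Suc_eq_plus1)
  qed
  have Pk: "P_sigma n c (sigma_weight n tau m k) t = - complex_of_real c * (VD y ({0..Suc n} - {Suc k}) / R)"
    if k: "k \<le> n" for k
  proof -
    have "VD (\<lambda>i. (wplus (wplus (wscale t (ebasis 1)) (sigma_weight n tau m k)) (rho_M n) i)^2) {1..n+1}
        = VD (\<lambda>p. y ((\<lambda>p::nat. if p = 1 then 0 else if p \<le> k + 1 then p - 1 else p) p)) {1..n+1}"
    proof (rule VD_cong)
      fix i :: nat assume i: "i \<in> {1..n+1}"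
      show "(wplus (wplus (wscale t (ebasis 1)) (sigma_weight n tau m k)) (rho_M n) i)^2 =
         y ((\<lambda>p::nat. if p = 1 then 0 else if p \<le> k + 1 then p - 1 else p) i)"
        by (simp only: x_eval[OF k i] y_def z_def A_def)
    qed
    also have "\<dots> = VD y ({0..Suc n} - {Suc k})"
      unfolding VD_reindex[OF phi_mono] phi_image[OF k] by (rule refl)
    finally show ?thesis
      unfolding P_sigma_def prod_pos_roots_ratio R_def by simp
  qed
  have D: "dim_G n (tau_weight n tau m) = VD y {1..Suc n} / R"
  proof -
    have "VD (\<lambda>i. (wplus (tau_weight n tau m) (rho_G n) i)^2) {1..n+1} = VD y {1..n+1}"
      by (rule VD_cong) (auto simp: wplus_def tau_weight_def rho_G_def y_def z_def A_def)
    then show ?thesis unfolding dim_G_def prod_pos_roots_ratio R_def by simp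
  qed
  have "(\<Sum>k = 0..n. (-1) ^ k * P_sigma n c (sigma_weight n tau m k) t)
      = (\<Sum>k = 0..n. (- complex_of_real c / R) * ((-1) ^ k * VD y ({0..Suc n} - {Suc k})))"
    by (rule sum.cong[OF refl]) (simp add: Pk)
  also have "\<dots> = (- complex_of_real c / R) * (\<Sum>k = 0..n. (-1) ^ k * VD y ({0..Suc n} - {Suc k}))"
    by (rule sum_distrib_left[symmetric])
  also have "\<dots> = (- complex_of_real c / R) * VD y {1..Suc n}"
    by (simp only: core_identity[OF inj])
  also have "\<dots> = - complex_of_real c * dim_G n (tau_weight n tau m)"
    by (simp add: D)
  finally show ?thesis .
qed

end
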